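(* Let $R$ be a commutative ring with identity, $n>1$, $S=M_n(R)$. Let $A_1,A_2$ be vertices of the orthogonality graph $O(S)$, and let $c_1,c_2\in R$ be nonzero elements with $c_i\det A_i=0$ ($i=1,2$) and $c_1c_2=0$. Then $d(A_1,A_2)\le 3$.
   Context: The orthogonality graph $O(S)$ of a ring $S$ is the undirected graph whose vertices are the nonzero two-sided zero-divisors of $S$, distinct vertices $x,y$ being adjacent iff $xy=yx=0$; $d$ is the graph distance. *)

theory Defs
  imports "HOL-Analysis.Analysis" "HOL-Library.Extended_Nat"
begin

definition two_sided_zd :: "'a::comm_ring_1^'n^'n \<Rightarrow> bool" where
  "two_sided_zd x \<longleftrightarrow> (\<exists>y::'a^'n^'n. y \<noteq> 0 \<and> x ** y = 0) \<and> (\<exists>z::'a^'n^'n. z \<noteq> 0 \<and> z ** x = 0)"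

definition orth_vertex :: "'a::comm_ring_1^'n^'n \<Rightarrow> bool" where
  "orth_vertex x \<longleftrightarrow> x \<noteq> 0 \<and> two_sided_zd x"

definition orth_adj :: "'a::comm_ring_1^'n^'n \<Rightarrow> 'a^'n^'n \<Rightarrow> bool" where
  "orth_adj x y \<longleftrightarrow> orth_vertex x \<and> orth_vertex y \<and> x \<noteq> y \<and> x ** y = 0 \<and> y ** x = 0"

text \<open>Walks and graph distance (infinite if no walk exists).\<close>
definition walk :: "('v \<Rightarrow> 'v \<Rightarrow> bool) \<Rightarrow> 'v list \<Rightarrow> bool" where
  "walk E xs \<longleftrightarrow> xs \<noteq> [] \<and> (\<forall>i. Suc i < length xs \<longrightarrow> E (xs ! i) (xs ! Suc i))"

definition graph_dist :: "('v \<Rightarrow> 'v \<Rightarrow> bool) \<Rightarrow> 'v \<Rightarrow> 'v \<Rightarrow> enat" where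
  "graph_dist E x y = (INF xs \<in> {xs. walk E xs \<and> hd xs = x \<and> last xs = y}. enat (length xs - 1))"

end

theory Submission imports Defs begin


definition ev :: "'n::finite \<Rightarrow> 'a::comm_ring_1^'n" where
  "ev p = (\<chi> r. if r = p then 1 else 0)"

definition colrep :: "'a::comm_ring_1^'n::finite^'n \<Rightarrow> 'n \<Rightarrow> 'a^'n \<Rightarrow> 'a^'n^'n" where
  "colrep N j v = (\<chi> r i. if i = j then v $ r else N $ r $ i)"

definition rowrep :: "'a::comm_ring_1^'n::finite^'n \<Rightarrow> 'n \<Rightarrow> 'a^'n \<Rightarrow> 'a^'n^'n" where
  "rowrep N p w = (\<chi> r. if r = p then w else N $ r)"

definition adjc :: "'a::comm_ring_1^'n::finite^'n \<Rightarrow> 'a^'n^'n" where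
  "adjc N = (\<chi> j p. det (colrep N j (ev p)))"

lemma L: "det (colrep N j (ev p)) = det (rowrep N p (ev j))"
  unfolding det_def
proof (rule sum.cong[OF refl])
  fix s assume "s \<in> {s. s permutes (UNIV::'b set)}"
  then have sp: "s permutes (UNIV::'b set)" by simp
  show "of_int (sign s) * (\<Prod>i\<in>UNIV. colrep N j (ev p) $ i $ s i) =
        of_int (sign s) * (\<Prod>i\<in>UNIV. rowrep N p (ev j) $ i $ s i)"
  proof (cases "s p = j")
    case True
    have "(\<Prod>i\<in>UNIV. colrep N j (ev p) $ i $ s i) = (\<Prod>i\<in>UNIV. rowrep N p (ev j) $ i $ s i)"
    proof (rule prod.cong[OF refl])
      fix i
      show "colrep N j (ev p) $ i $ s i = rowrep N p (ev j) $ i $ s i"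
        using True permutes_inj[OF sp] by (auto simp: colrep_def rowrep_def ev_def dest: injD)
    qed
    then show ?thesis by simp
  next
    case False
    obtain i0 where i0: "s i0 = j" using permutes_surj[OF sp] by (metis surjD)
    with False have "i0 \<noteq> p" by auto
    have "(\<Prod>i\<in>UNIV. colrep N j (ev p) $ i $ s i) = 0"
      by (rule prod_zero) (use i0 \<open>i0 \<noteq> p\<close> in \<open>auto simp: colrep_def ev_def intro!: bexI[of _ i0]\<close>)
    moreover have "(\<Prod>i\<in>UNIV. rowrep N p (ev j) $ i $ s i) = 0"
      by (rule prod_zero) (use False in \<open>auto simp: rowrep_def ev_def intro!: bexI[of _ p]\<close>)
    ultimately show ?thesis by simp
  qed
qed

lemma row_lin:
  fixes N :: "'a::comm_ring_1^'n::finite^'n" and w :: "'n \<Rightarrow> 'a^'n"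
  shows "det (rowrep N p (\<Sum>a\<in>UNIV. v a *s w a)) = (\<Sum>a\<in>UNIV. v a * det (rowrep N p (w a)))"
proof -
  have "det (rowrep N p (\<Sum>a\<in>UNIV. v a *s w a)) = (\<Sum>a\<in>UNIV. det (\<chi> r. if r = p then v a *s w a else N $ r))"
    unfolding rowrep_def by (rule det_linear_row_sum) simp
  also have "\<dots> = (\<Sum>a\<in>UNIV. v a * det (rowrep N p (w a)))"
    unfolding rowrep_def by (simp add: det_row_mul)
  finally show ?thesis .
qed

lemma sum_ev: "(\<Sum>a\<in>UNIV. v $ a *s ev a) = (v :: 'a::comm_ring_1^'n::finite)"
  by (simp add: vec_eq_iff ev_def sum_component if_distrib cong: if_cong)

lemma rowrep_same: "det (rowrep N p (N $ r)) = (if r = p then det N else 0)"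
proof (cases "r = p")
  case True
  then have "rowrep N p (N $ r) = N" by (simp add: rowrep_def vec_eq_iff)
  then show ?thesis using True by simp
next
  case False
  have "row r (rowrep N p (N $ r)) = row p (rowrep N p (N $ r))"
    using False by (simp add: rowrep_def row_def vec_eq_iff)
  then show ?thesis using False det_identical_rows[OF False] by simp
qed

lemma F1: "(N ** adjc N) $ r $ p = (if r = p then det N else 0)"
proof -
  have "(N ** adjc N) $ r $ p = (\<Sum>j\<in>UNIV. N $ r $ j * det (rowrep N p (ev j)))"
    by (simp add: matrix_matrix_mult_def adjc_def L)
  also have "\<dots> = det (rowrep N p (\<Sum>j\<in>UNIV. N $ r $ j *s ev j))"
    by (simp add: row_lin)
  also have "\<dots> = det (rowrep N p (N $ r))" by (simp add: sum_ev)
  finally show ?thesis by (simp add: rowrep_same)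
qed

lemma colrep_transpose: "det (colrep N j w) = det (rowrep (transpose N) j w)"
proof -
  have "colrep N j w = transpose (rowrep (transpose N) j w)"
    by (simp add: colrep_def rowrep_def transpose_def vec_eq_iff)
  then show ?thesis by simp
qed

lemma col_lin: "(\<Sum>p\<in>UNIV. det (colrep N i (ev p)) * A $ p $ k) = det (colrep N i (column k A))"
proof -
  have "det (colrep N i (column k A)) = det (rowrep (transpose N) i (\<Sum>p\<in>UNIV. A $ p $ k *s ev p))"
    using sum_ev[of "column k A"] by (simp add: colrep_transpose column_def)
  also have "\<dots> = (\<Sum>p\<in>UNIV. A $ p $ k * det (colrep N i (ev p)))"
    by (simp add: row_lin colrep_transpose)
  finally show ?thesis by (simp add: mult.commute)
qed

definition Gm :: "'a::comm_ring_1^'n::finite^'n \<Rightarrow> ('n \<Rightarrow> 'n + 'n) \<Rightarrow> 'a^'n^'n" where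
  "Gm A g = (\<chi> r i. case g i of Inl a \<Rightarrow> A $ r $ a | Inr q \<Rightarrow> ev q $ r)"

definition cnt :: "('n::finite \<Rightarrow> 'n + 'n) \<Rightarrow> nat" where
  "cnt g = card {i. isl (g i)}"

lemma Gm_Inr: "colrep (Gm A g) i (ev p) = Gm A (g(i := Inr p))"
  by (simp add: colrep_def Gm_def vec_eq_iff)

lemma Gm_Inl: "colrep (Gm A g) i (column k A) = Gm A (g(i := Inl k))"
  by (simp add: colrep_def Gm_def vec_eq_iff column_def)

lemma Gm_id: "Gm A Inr = mat 1"
  by (simp add: Gm_def vec_eq_iff ev_def mat_def)

lemma cnt_le: "cnt g \<le> CARD('n)" for g :: "'n::finite \<Rightarrow> 'n + 'n"
  unfolding cnt_def by (rule card_mono) auto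

lemma cnt_upd_same:
  assumes "isl (g i) = isl v" shows "cnt (g(i := v)) = cnt g"
proof -
  have "{j. isl ((g(i := v)) j)} = {j. isl (g j)}" using assms by auto
  then show ?thesis by (simp add: cnt_def)
qed

lemma Gm_all_Inl:
  fixes A :: "'a::comm_ring_1^'n::finite^'n"
  assumes "cnt g = CARD('n)"
  shows "\<exists>e. det (Gm A g) = e * det A"
proof -
  have "{i. isl (g i)} = UNIV"
    by (rule card_subset_eq) (use assms in \<open>auto simp: cnt_def\<close>)
  then have il: "\<And>i. isl (g i)" by blast
  define h where "h i = projl (g i)" for i
  have G: "Gm A g = (\<chi> r i. A $ r $ h i)"
    using il unfolding Gm_def h_def by (simp add: vec_eq_iff sum.case_eq_if)
  show ?thesis
  proof (cases "inj h")
    case True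
    then have "h permutes UNIV" by (intro inj_imp_permutes) auto
    then show ?thesis unfolding G using det_permute_columns[of h A] by blast
  next
    case False
    then obtain j k where jk: "j \<noteq> k" "h j = h k" unfolding inj_def by auto
    have "column j (\<chi> r i. A $ r $ h i) = column k (\<chi> r i. A $ r $ h i)"
      using jk by (simp add: column_def vec_eq_iff)
    then have "det (\<chi> r i. A $ r $ h i) = 0" using det_identical_columns[OF jk(1)] by blast
    then show ?thesis unfolding G by (intro exI[of _ 0]) simp
  qed
qed

lemma key:
  fixes A :: "'a::comm_ring_1^'n::finite^'n" and c :: 'a
  assumes c0: "c \<noteq> 0" and cd: "c * det A = 0"
  shows "\<exists>B. B \<noteq> 0 \<and> A ** B = 0 \<and> B ** A = 0 \<and> (\<forall>a p. \<exists>x. B $ a $ p = c * x)"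
proof -
  define S where "S = {cnt g | g. c * det (Gm A g) \<noteq> 0}"
  have S0: "0 \<in> S" unfolding S_def
    by (rule CollectI, rule exI[of _ Inr]) (use c0 in \<open>simp add: Gm_id cnt_def\<close>)
  have finS: "finite S"
    by (rule finite_subset[of _ "{..CARD('n)}"]) (auto simp: S_def cnt_le)
  define t where "t = Max S"
  have "t \<in> S" unfolding t_def using S0 finS by (intro Max_in) auto
  then obtain g where gt: "cnt g = t" and gnz: "c * det (Gm A g) \<noteq> 0"
    unfolding S_def by blast
  have maxp: "c * det (Gm A g') = 0" if "cnt g' > t" for g'
  proof (rule ccontr)
    assume "c * det (Gm A g') \<noteq> 0"
    then have "cnt g' \<in> S" unfolding S_def by blast
    then have "cnt g' \<le> t" unfolding t_def using finS by simp
    with that show False by simp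
  qed
  have tn: "t < CARD('n)"
  proof (rule ccontr)
    assume "\<not> t < CARD('n)"
    then have "cnt g = CARD('n)" using cnt_le[of g] gt by simp
    then obtain e where "det (Gm A g) = e * det A" using Gm_all_Inl by blast
    then have "c * det (Gm A g) = e * (c * det A)" by (simp add: ac_simps)
    with cd gnz show False by simp
  qed
  have "{i. isl (g i)} \<noteq> UNIV"
  proof
    assume "{i. isl (g i)} = UNIV"
    then have "cnt g = CARD('n)" by (simp add: cnt_def)
    with tn gt show False by simp
  qed
  then obtain q0 where q0: "\<not> isl (g q0)" by blast
  then obtain r0 where r0: "g q0 = Inr r0" by (cases "g q0") auto
  have "card ((\<lambda>i. projl (g i)) ` {i. isl (g i)}) \<le> t"
    using card_image_le[of "{i. isl (g i)}" "\<lambda>i. projl (g i)"] gt by (simp add: cnt_def)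
  then have "(\<lambda>i. projl (g i)) ` {i. isl (g i)} \<noteq> UNIV" using tn by auto
  then obtain s where s: "s \<notin> (\<lambda>i. projl (g i)) ` {i. isl (g i)}" by blast
  have gs: "g i \<noteq> Inl s" for i
  proof
    assume "g i = Inl s"
    then have "isl (g i)" "projl (g i) = s" by auto
    with s show False by blast
  qed
  define g1 where "g1 = g(q0 := Inl s)"
  have "{i. isl (g1 i)} = insert q0 {i. isl (g i)}" by (auto simp: g1_def)
  then have cg1: "cnt g1 = t + 1" using q0 gt by (simp add: cnt_def)
  define N1 where "N1 = Gm A g1"
  have k1: "c * (\<Sum>p\<in>UNIV. adjc N1 $ i $ p * A $ p $ k) = 0" if "isl (g1 i)" for i k
  proof -
    have "(\<Sum>p\<in>UNIV. adjc N1 $ i $ p * A $ p $ k) = det (Gm A (g1(i := Inl k)))"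
      by (simp add: adjc_def col_lin N1_def Gm_Inl)
    moreover have "cnt (g1(i := Inl k)) = t + 1" using that cg1 by (simp add: cnt_upd_same)
    ultimately show ?thesis using maxp by simp
  qed
  have k2: "c * adjc N1 $ i $ p = 0" if "\<not> isl (g1 i)" for i p
  proof -
    have "adjc N1 $ i $ p = det (Gm A (g1(i := Inr p)))"
      by (simp add: adjc_def N1_def Gm_Inr)
    moreover have "cnt (g1(i := Inr p)) = t + 1" using that cg1 by (simp add: cnt_upd_same)
    ultimately show ?thesis using maxp by simp
  qed
  have k3: "c * det N1 = 0" using maxp cg1 by (simp add: N1_def)
  define B where "B = (\<chi> a p. c * (\<Sum>i\<in>{i. g1 i = Inl a}. adjc N1 $ i $ p))"
  have BA: "B ** A = 0"
  proof -
    have "(B ** A) $ a $ k = 0" for a k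
    proof -
      have "(B ** A) $ a $ k = (\<Sum>p\<in>UNIV. (\<Sum>i\<in>{i. g1 i = Inl a}. c * (adjc N1 $ i $ p * A $ p $ k)))"
        by (simp add: B_def matrix_matrix_mult_def sum_distrib_left sum_distrib_right ac_simps)
      also have "\<dots> = (\<Sum>i\<in>{i. g1 i = Inl a}. c * (\<Sum>p\<in>UNIV. adjc N1 $ i $ p * A $ p $ k))"
        by (subst sum.swap) (simp add: sum_distrib_left)
      also have "\<dots> = 0" using k1 by (intro sum.neutral) auto
      finally show ?thesis .
    qed
    then show ?thesis by (simp add: vec_eq_iff)
  qed
  have AB: "A ** B = 0"
  proof -
    have "(A ** B) $ r $ p = 0" for r p
    proof -
      have "(A ** B) $ r $ p = (\<Sum>a\<in>UNIV. \<Sum>i\<in>UNIV. if g1 i = Inl a then A $ r $ a * (c * adjc N1 $ i $ p) else 0)"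
        by (simp add: B_def matrix_matrix_mult_def sum_distrib_left sum.If_cases Collect_conv_if)
      also have "\<dots> = (\<Sum>i\<in>UNIV. \<Sum>a\<in>UNIV. if g1 i = Inl a then A $ r $ a * (c * adjc N1 $ i $ p) else 0)"
        by (rule sum.swap)
      also have "\<dots> = (\<Sum>i\<in>UNIV. c * (N1 $ r $ i * adjc N1 $ i $ p))"
      proof (rule sum.cong[OF refl])
        fix i
        show "(\<Sum>a\<in>UNIV. if g1 i = Inl a then A $ r $ a * (c * adjc N1 $ i $ p) else 0) =
              c * (N1 $ r $ i * adjc N1 $ i $ p)"
        proof (cases "g1 i")
          case (Inl a)
          then show ?thesis by (simp add: N1_def Gm_def ac_simps)
        next
          case (Inr b)
          then have z: "c * adjc N1 $ i $ p = 0" using k2 by simp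
          have "c * (N1 $ r $ i * adjc N1 $ i $ p) = N1 $ r $ i * (c * adjc N1 $ i $ p)"
            by (simp only: mult.left_commute)
          then show ?thesis using Inr z by simp
        qed
      qed
      also have "\<dots> = c * (N1 ** adjc N1) $ r $ p"
        by (simp add: matrix_matrix_mult_def sum_distrib_left)
      also have "\<dots> = 0" using k3 by (simp add: F1)
      finally show ?thesis .
    qed
    then show ?thesis by (simp add: vec_eq_iff)
  qed
  have "B $ s $ r0 \<noteq> 0"
  proof -
    have "{i. g1 i = Inl s} = {q0}" using gs by (auto simp: g1_def)
    then have "B $ s $ r0 = c * adjc N1 $ q0 $ r0" by (simp add: B_def)
    also have "\<dots> = c * det (Gm A (g1(q0 := Inr r0)))" by (simp add: adjc_def N1_def Gm_Inr)
    also have "g1(q0 := Inr r0) = g" using r0 by (auto simp: g1_def)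
    finally show ?thesis using gnz by simp
  qed
  then have "B \<noteq> 0" by auto
  moreover have "\<forall>a p. \<exists>x. B $ a $ p = c * x" unfolding B_def by auto
  ultimately show ?thesis using AB BA by blast
qed

lemma walk_cons2: "walk E (x # y # zs) = (E x y \<and> walk E (y # zs))"
proof
  assume w: "walk E (x # y # zs)"
  then have h: "\<And>i. Suc i < Suc (Suc (length zs)) \<Longrightarrow> E ((x#y#zs)!i) ((x#y#zs)!Suc i)"
    by (simp add: walk_def)
  have "E x y" using h[of 0] by simp
  moreover have "walk E (y#zs)" unfolding walk_def
  proof (intro conjI allI impI)
    show "y # zs \<noteq> []" by simp
    fix i assume "Suc i < length (y#zs)"
    then show "E ((y#zs)!i) ((y#zs)!Suc i)" using h[of "Suc i"] by simp
  qed
  ultimately show "E x y \<and> walk E (y # zs)" ..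
next
  assume a: "E x y \<and> walk E (y # zs)"
  show "walk E (x # y # zs)" unfolding walk_def
  proof (intro conjI allI impI)
    show "x # y # zs \<noteq> []" by simp
    fix i assume i: "Suc i < length (x # y # zs)"
    show "E ((x # y # zs)!i) ((x # y # zs)!Suc i)"
    proof (cases i)
      case 0 then show ?thesis using a by simp
    next
      case (Suc j)
      then have "Suc j < length (y # zs)" using i by simp
      then show ?thesis using a Suc by (simp add: walk_def)
    qed
  qed
qed

fun ch :: "('v \<Rightarrow> 'v \<Rightarrow> bool) \<Rightarrow> 'v list \<Rightarrow> bool" where
  "ch E [] = True"
| "ch E [x] = True"
| "ch E (x # y # zs) = ((x = y \<or> E x y) \<and> ch E (y # zs))"

lemma ch_walk: "ch E (x # xs) \<Longrightarrow> \<exists>ys. walk E ys \<and> hd ys = x \<and> last ys = last (x # xs) \<and> length ys \<le> length (x # xs)"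
proof (induction xs arbitrary: x)
  case Nil
  then show ?case by (intro exI[of _ "[x]"]) (simp add: walk_def)
next
  case (Cons y zs)
  then have "ch E (y # zs)" and xy: "x = y \<or> E x y" by auto
  then obtain ys where ys: "walk E ys" "hd ys = y" "last ys = last (y # zs)" "length ys \<le> length (y # zs)"
    using Cons.IH by blast
  show ?case
  proof (cases "x = y")
    case True then show ?thesis using ys by (intro exI[of _ ys]) auto
  next
    case False
    then have Exy: "E x y" using xy by simp
    have ne: "ys \<noteq> []" using ys(1) by (simp add: walk_def)
    then have ys': "ys = y # tl ys" using ys(2) by (cases ys) auto
    have "walk E (x # ys)" using ys(1) Exy by (subst ys', subst walk_cons2) (simp add: ys'[symmetric])
    then show ?thesis using ys ne by (intro exI[of _ "x # ys"]) auto
  qed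
qed

lemma walk_dist: "walk E ys \<Longrightarrow> graph_dist E (hd ys) (last ys) \<le> enat (length ys - 1)"
  unfolding graph_dist_def by (rule INF_lower) auto

theorem lemma3:
  fixes A1 A2 :: "'a::comm_ring_1^'n::finite^'n" and c1 c2 :: 'a
  assumes "CARD('n) > 1"
    and "orth_vertex A1" and "orth_vertex A2"
    and "c1 \<noteq> 0" and "c2 \<noteq> 0"
    and "c1 * det A1 = 0" and "c2 * det A2 = 0"
    and "c1 * c2 = 0"
  shows "graph_dist orth_adj A1 A2 \<le> 3"
proof -
  obtain B1 where B1: "B1 \<noteq> 0" "A1 ** B1 = 0" "B1 ** A1 = 0" "\<forall>a p. \<exists>x. B1 $ a $ p = c1 * x"
    using key[OF assms(4,6)] by blast
  obtain B2 where B2: "B2 \<noteq> 0" "A2 ** B2 = 0" "B2 ** A2 = 0" "\<forall>a p. \<exists>x. B2 $ a $ p = c2 * x"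
    using key[OF assms(5,7)] by blast
  have A0: "A1 \<noteq> 0" "A2 \<noteq> 0" using assms(2,3) by (auto simp: orth_vertex_def)
  have prod0: "X ** Y = 0" if X: "\<forall>a p. \<exists>x. X $ a $ p = c * x" and Y: "\<forall>a p. \<exists>x. Y $ a $ p = d * x"
    and cd: "c * d = 0" for X Y :: "'a^'n^'n" and c d
  proof -
    have "X $ a $ k * Y $ k $ b = 0" for a k b
    proof -
      obtain x y where "X $ a $ k = c * x" "Y $ k $ b = d * y" using X Y by blast
      then have "X $ a $ k * Y $ k $ b = (c * d) * (x * y)" by (simp add: ac_simps)
      then show ?thesis using cd by simp
    qed
    then show ?thesis by (simp add: vec_eq_iff matrix_matrix_mult_def)
  qed
  have B12: "B1 ** B2 = 0" using prod0[OF B1(4) B2(4) assms(8)] .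
  have B21: "B2 ** B1 = 0" using prod0[OF B2(4) B1(4)] assms(8) by (simp add: mult.commute)
  have V1: "orth_vertex B1" using B1 A0 unfolding orth_vertex_def two_sided_zd_def by blast
  have V2: "orth_vertex B2" using B2 A0 unfolding orth_vertex_def two_sided_zd_def by blast
  have "ch orth_adj [A1, B1, B2, A2]"
    using assms(2,3) V1 V2 B1 B2 B12 B21 by (auto simp: orth_adj_def)
  then obtain ys where ys: "walk orth_adj ys" "hd ys = A1" "last ys = A2" "length ys \<le> 4"
    using ch_walk[of orth_adj A1 "[B1, B2, A2]"] by auto
  have "graph_dist orth_adj A1 A2 \<le> enat (length ys - 1)" using walk_dist[OF ys(1)] ys(2,3) by simp
  also have "\<dots> \<le> 3" using ys(4) by (simp add: numeral_eq_enat)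
  finally show ?thesis .
qed

end
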